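(* The binary word $101$ has an internal zero at $n=6$ and at no other $n\ge0$.
   Context: $c_p(w)$ is the number of occurrences of $p$ as a (not necessarily consecutive) subsequence of $w$; $B_{n,p}(k)$ is the number of binary words of length $n$ with $c_p(w)=k$. $p$ has an internal zero at $n$ if there exist $0\le k_1<k_2<k_3$ with $B_{n,p}(k_1)\ne0$, $B_{n,p}(k_2)=0$, $B_{n,p}(k_3)\ne0$. *)

theory Defs
  imports Main
begin

definition subseq_count :: "nat list \<Rightarrow> nat list \<Rightarrow> nat" where
  "subseq_count p w = card {I. I \<subseteq> {0..<length w} \<and> card I = length p \<and> nths w I = p}"

definition binary_words :: "nat \<Rightarrow> nat list set" where
  "binary_words n = {w. length w = n \<and> set w \<subseteq> {0, 1}}"

definition B :: "nat \<Rightarrow> nat list \<Rightarrow> nat \<Rightarrow> nat" where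
  "B n p k = card {w \<in> binary_words n. subseq_count p w = k}"

definition has_internal_zero :: "nat list \<Rightarrow> nat \<Rightarrow> bool" where
  "has_internal_zero p n \<longleftrightarrow>
     (\<exists>k1 k2 k3. k1 < k2 \<and> k2 < k3 \<and> B n p k1 \<noteq> 0 \<and> B n p k2 = 0 \<and> B n p k3 \<noteq> 0)"

end

theory Submission
  imports Defs "HOL-Library.Multiset"
begin


lemma nths_Suc_image: "nths (x#w) (Suc ` J) = nths w J"
  by (simp add: nths_Cons image_iff)

lemma nths_ins0: "nths (x#w) (insert 0 (Suc ` J)) = x # nths w J"
  by (simp add: nths_Cons image_iff)

definition T :: "nat list \<Rightarrow> nat list \<Rightarrow> nat set set" where
  "T q w = {J. J \<subseteq> {0..<length w} \<and> card J = length q \<and> nths w J = q}"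

lemma sc_T: "subseq_count q w = card (T q w)"
  by (simp add: subseq_count_def T_def)

lemma sc_Nil: "subseq_count [] w = 1"
proof -
  have "T [] w = {{}}"
    unfolding T_def by (auto dest: finite_subset)
  then show ?thesis by (simp add: sc_T)
qed

lemma T_fin: "finite (T q w)"
  unfolding T_def by (rule finite_subset[of _ "Pow {0..<length w}"]) auto

lemma decomp_Suc: assumes "0 \<notin> I" shows "I = Suc ` {j. Suc j \<in> I}"
proof
  show "I \<subseteq> Suc ` {j. Suc j \<in> I}"
  proof
    fix i assume "i \<in> I"
    with assms obtain j where "i = Suc j" by (cases i) auto
    with \<open>i \<in> I\<close> show "i \<in> Suc ` {j. Suc j \<in> I}" by auto
  qed
qed auto

lemma decomp_0: assumes "0 \<in> I" shows "I = insert 0 (Suc ` {j. Suc j \<in> I})"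
proof
  show "I \<subseteq> insert 0 (Suc ` {j. Suc j \<in> I})"
  proof
    fix i assume "i \<in> I"
    then show "i \<in> insert 0 (Suc ` {j. Suc j \<in> I})" by (cases i) auto
  qed
qed (use assms in auto)

lemma sc_cons: "subseq_count (a#p) (x#w) = subseq_count (a#p) w + (if x = a then subseq_count p w else 0)"
proof -
  let ?S = "T (a#p) (x#w)"
  let ?Z = "{I\<in>?S. (0::nat) \<notin> I}"
  let ?O = "{I\<in>?S. (0::nat) \<in> I}"
  have split: "?S = ?Z \<union> ?O" by auto
  have fin0: "finite ?Z" and fin1: "finite ?O" using T_fin[of "a#p" "x#w"] by auto
  have S0: "?Z = image Suc ` T (a#p) w"
  proof
    show "?Z \<subseteq> image Suc ` T (a#p) w"
    proof
      fix I assume I: "I \<in> ?Z"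
      define J where "J = {j. Suc j \<in> I}"
      have IJ: "I = Suc ` J" using decomp_Suc I J_def by auto
      have "J \<in> T (a#p) w"
        using I unfolding T_def IJ by (auto simp: nths_Suc_image card_image)
      then show "I \<in> image Suc ` T (a#p) w" using IJ by auto
    qed
  next
    show "image Suc ` T (a#p) w \<subseteq> ?Z"
      by (auto simp: T_def nths_Suc_image card_image)
  qed
  have inj0: "inj_on (image Suc) (T (a#p) w)"
    by (meson inj_Suc inj_image_eq_iff inj_onI)
  have S1: "?O = (if x = a then (\<lambda>J. insert 0 (Suc ` J)) ` T p w else {})"
  proof (cases "x = a")
    case True
    have "?O = (\<lambda>J. insert 0 (Suc ` J)) ` T p w"
    proof
      show "?O \<subseteq> (\<lambda>J. insert 0 (Suc ` J)) ` T p w"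
      proof
        fix I assume I: "I \<in> ?O"
        define J where "J = {j. Suc j \<in> I}"
        have IJ: "I = insert 0 (Suc ` J)" using decomp_0 I J_def by auto
        have fJ: "finite J" using I unfolding T_def IJ
          by (metis (no_types, lifting) finite_atLeastLessThan finite_imageD finite_insert finite_subset inj_Suc inj_on_subset mem_Collect_eq subset_UNIV)
        have "J \<in> T p w"
          using I fJ unfolding T_def IJ by (auto simp: nths_ins0 card_image)
        then show "I \<in> (\<lambda>J. insert 0 (Suc ` J)) ` T p w" using IJ by auto
      qed
    next
      show "(\<lambda>J. insert 0 (Suc ` J)) ` T p w \<subseteq> ?O"
      proof
        fix I assume "I \<in> (\<lambda>J. insert 0 (Suc ` J)) ` T p w"
        then obtain J where J: "J \<in> T p w" and IJ: "I = insert 0 (Suc ` J)" by blast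
        have fJ: "finite J" using J unfolding T_def using finite_subset by blast
        have "card I = Suc (card J)" using fJ unfolding IJ by (simp add: card_image)
        moreover have "I \<subseteq> {0..<length (x#w)}" using J unfolding T_def IJ by auto
        moreover have "nths (x#w) I = a#p" using J True unfolding T_def IJ by (simp add: nths_ins0)
        moreover have "card J = length p" using J unfolding T_def by simp
        ultimately show "I \<in> ?O" unfolding T_def IJ by (simp only: mem_Collect_eq insert_iff simp_thms length_Cons)
      qed
    qed
    then show ?thesis using True by simp
  next
    case False
    have "?O = {}"
    proof (rule ccontr)
      assume "?O \<noteq> {}"
      then obtain I where I: "I \<in> ?O" by blast
      have "I = insert 0 (Suc ` {j. Suc j \<in> I})" using decomp_0 I by auto
      then have "nths (x#w) I = x # nths w {j. Suc j \<in> I}" by (metis nths_ins0)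
      with I False show False by (simp add: T_def)
    qed
    then show ?thesis using False by simp
  qed
  have inj1: "inj_on (\<lambda>J. insert 0 (Suc ` J)) (T p w)"
  proof (rule inj_onI)
    fix J1 J2 assume "insert 0 (Suc ` J1) = insert 0 (Suc ` J2)"
    then have "Suc ` J1 = Suc ` J2" by (metis Zero_not_Suc image_iff insert_ident)
    then show "J1 = J2" by (meson inj_Suc inj_image_eq_iff)
  qed
  have e: "card ?S = card ?Z + card ?O"
    by (subst split, rule card_Un_disjoint) (use fin0 fin1 in auto)
  have e0: "card ?Z = card (T (a#p) w)" using S0 inj0 by (simp add: card_image)
  have e1: "card ?O = (if x = a then card (T p w) else 0)"
    unfolding S1 using inj1 by (simp add: card_image)
  show ?thesis unfolding sc_T using e e0 e1 by simp
qed

lemma sc_empty: "subseq_count (a#p) [] = 0"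
  by (simp add: subseq_count_def)



definition ones :: "nat list \<Rightarrow> nat" where "ones w = length (filter (\<lambda>x. x = 1) w)"

fun R :: "nat list \<Rightarrow> nat list" where
  "R [] = []"
| "R (x#w) = (if x = 0 then ones w # R w else R w)"

definition Val :: "nat \<Rightarrow> nat list \<Rightarrow> nat" where
  "Val m rs = sum_list (map (\<lambda>r. (m - r) * r) rs)"

lemma sc1: "subseq_count [a] w = length (filter (\<lambda>x. x = a) w)"
  by (induction w) (auto simp: sc_cons sc_Nil sc_empty)

lemma word_char:
  assumes "set w \<subseteq> {0,1}"
  shows "subseq_count [0,1] w = sum_list (R w) \<and> subseq_count [1,0,1] w = Val (ones w) (R w)
     \<and> (\<forall>r\<in>set (R w). r \<le> ones w) \<and> length (R w) + ones w = length w"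
  using assms
proof (induction w)
  case Nil
  then show ?case by (simp add: sc_empty Val_def ones_def)
next
  case (Cons x w)
  then have IH: "subseq_count [0,1] w = sum_list (R w)" "subseq_count [1,0,1] w = Val (ones w) (R w)"
     "\<forall>r\<in>set (R w). r \<le> ones w" "length (R w) + ones w = length w" by auto
  from Cons.prems have x: "x = 0 \<or> x = 1" by auto
  then show ?case
  proof
    assume x0: "x = 0"
    have o: "ones (x#w) = ones w" using x0 by (simp add: ones_def)
    show ?thesis using IH x0 o
      by (simp add: sc_cons sc1 Val_def ones_def)
  next
    assume x1: "x = 1"
    have o: "ones (x#w) = Suc (ones w)" using x1 by (simp add: ones_def)
    have "Val (Suc (ones w)) (R w) = Val (ones w) (R w) + sum_list (R w)"
    proof -
      have "map (\<lambda>r. (Suc (ones w) - r) * r) (R w) = map (\<lambda>r. (ones w - r) * r + r) (R w)"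
        using IH(3) by (intro map_cong) (auto simp: Suc_diff_le)
      then have "Val (Suc (ones w)) (R w) = sum_list (map (\<lambda>r. (ones w - r) * r + r) (R w))"
        unfolding Val_def by (rule arg_cong)
      also have "\<dots> = Val (ones w) (R w) + sum_list (R w)"
        by (simp add: Val_def sum_list_addf)
      finally show ?thesis .
    qed
    moreover have "\<forall>r\<in>set (R (x#w)). r \<le> ones (x#w)" using IH(3) x1 o by auto
    ultimately show ?thesis using IH x1 o
      by (simp add: sc_cons sc1 ones_def)
  qed
qed

fun build :: "nat \<Rightarrow> nat list \<Rightarrow> nat list" where
  "build m [] = replicate m 1"
| "build m (r#rs) = replicate (m - r) 1 @ 0 # build r rs"

lemma R_rep: "R (replicate k 1 @ w) = R w"
  by (induction k) auto

lemma ones_rep: "ones (replicate k 1 @ w) = k + ones w"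
  by (induction k) (auto simp: ones_def)

lemma build_props:
  assumes "sorted_wrt (\<ge>) rs" "\<forall>r\<in>set rs. r \<le> m"
  shows "ones (build m rs) = m \<and> R (build m rs) = rs \<and> length (build m rs) = m + length rs
     \<and> set (build m rs) \<subseteq> {0,1}"
  using assms
proof (induction rs arbitrary: m)
  case Nil
  have "R (replicate m 1 @ []) = []" by (simp only: R_rep) simp
  then show ?case by (auto simp: ones_def)
next
  case (Cons r rs)
  then have IH: "ones (build r rs) = r \<and> R (build r rs) = rs \<and> length (build r rs) = r + length rs
     \<and> set (build r rs) \<subseteq> {0,1}" by auto
  have rm: "r \<le> m" using Cons.prems by auto
  have "R (build m (r#rs)) = r # rs" using IH by (simp only: build.simps R_rep) simp
  moreover have "ones (build m (r#rs)) = m" using IH rm by (simp only: build.simps ones_rep) (simp add: ones_def)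
  ultimately show ?case using IH rm by auto
qed

definition Vals :: "nat \<Rightarrow> nat set" where
  "Vals n = {subseq_count [1,0,1] w | w. w \<in> binary_words n}"

lemma construct:
  assumes "length rs + m = n" "\<forall>r\<in>set rs. r \<le> m"
  shows "Val m rs \<in> Vals n"
proof -
  let ?rs = "rev (sort rs)"
  have s: "sorted_wrt (\<ge>) ?rs" by (simp add: sorted_wrt_rev)
  have b: "\<forall>r\<in>set ?rs. r \<le> m" using assms(2) by simp
  note P = build_props[OF s b]
  have "Val m ?rs = Val m rs"
  proof -
    have "mset ?rs = mset rs" by simp
    then have "mset (map (\<lambda>r. (m - r) * r) ?rs) = mset (map (\<lambda>r. (m - r) * r) rs)"
      by (simp only: mset_map)
    then show ?thesis unfolding Val_def by (metis sum_mset_sum_list)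
  qed
  moreover have "build m ?rs \<in> binary_words n" using P assms(1) by (auto simp: binary_words_def)
  moreover have "subseq_count [1,0,1] (build m ?rs) = Val m ?rs"
    using word_char[of "build m ?rs"] P by simp
  ultimately show ?thesis unfolding Vals_def by force
qed

lemma charac:
  assumes "w \<in> binary_words n"
  shows "\<exists>m rs. length rs + m = n \<and> (\<forall>r\<in>set rs. r \<le> m) \<and> subseq_count [1,0,1] w = Val m rs"
  using word_char[of w] assms unfolding binary_words_def by auto

lemma B_nz: "B n [1,0,1] k \<noteq> 0 \<longleftrightarrow> k \<in> Vals n"
proof -
  have fin: "finite (binary_words n)"
  proof -
    have "binary_words n \<subseteq> {w. set w \<subseteq> {0,1} \<and> length w = n}" by (auto simp: binary_words_def)
    moreover have "finite {w. set w \<subseteq> {0::nat,1} \<and> length w = n}"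
      by (rule finite_lists_length_eq) simp
    ultimately show ?thesis by (rule finite_subset)
  qed
  show ?thesis unfolding B_def Vals_def using fin by auto
qed



definition Q :: "nat \<Rightarrow> nat \<Rightarrow> nat set" where
  "Q t z = {sum_list (map (\<lambda>d. d^2) ds) | ds. length ds = z \<and> (\<forall>d\<in>set ds. d \<le> t)}"

lemma Q_add: assumes "x \<in> Q t z" "d \<le> t" shows "x + d^2 \<in> Q t (Suc z)"
proof -
  obtain ds where "x = sum_list (map (\<lambda>d. d^2) ds)" "length ds = z" "\<forall>d\<in>set ds. d \<le> t"
    using assms(1) unfolding Q_def by blast
  then show ?thesis unfolding Q_def using assms(2)
    by (auto intro!: exI[of _ "d#ds"])
qed

lemma Q_zero: "0 \<in> Q t 0" unfolding Q_def by auto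

lemma Q_ones: assumes "1 \<le> t" "r \<le> z" shows "r \<in> Q t z"
  using assms(2)
proof (induction z arbitrary: r)
  case 0 then show ?case using Q_zero by simp
next
  case (Suc z)
  show ?case
  proof (cases "r = 0")
    case True
    then have "0 \<in> Q t z" using Suc.IH by simp
    then show ?thesis using Q_add[of 0 t z 0] True by simp
  next
    case False
    then obtain r' where r: "r = Suc r'" by (cases r) auto
    then have "r' \<in> Q t z" using Suc by simp
    then show ?thesis using Q_add[of r' t z 1] r assms(1) by simp
  qed
qed

lemma sqrt_ex: "\<exists>d::nat. d^2 \<le> x \<and> x < (Suc d)^2"
proof (induction x)
  case 0 then show ?case by (auto intro: exI[of _ 0])
next
  case (Suc x)
  then obtain d where d: "d^2 \<le> x" "x < (Suc d)^2" by blast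
  show ?case
  proof (cases "Suc x < (Suc d)^2")
    case True then show ?thesis using d by (auto intro!: exI[of _ d])
  next
    case False
    then have "Suc x = (Suc d)^2" using d by simp
    moreover have "(Suc d)^2 < (Suc (Suc d))^2" by (simp add: power2_eq_square; arith)
    ultimately show ?thesis by (intro exI[of _ "Suc d"]) simp
  qed
qed

lemma Q_step:
  assumes "\<forall>x\<le>L. x \<in> Q t z" "s \<le> t" "2*s \<le> L + 2"
  shows "\<forall>x\<le>L + s^2. x \<in> Q t (Suc z)"
proof (intro allI impI)
  fix x assume x: "x \<le> L + s^2"
  show "x \<in> Q t (Suc z)"
  proof (cases "s^2 \<le> x")
    case True
    then have "x - s^2 \<in> Q t z" using assms(1) x by simp
    then show ?thesis using Q_add[of "x - s^2" t z s] assms(2) True by simp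
  next
    case False
    obtain d where d: "d^2 \<le> x" "x < (Suc d)^2" using sqrt_ex by blast
    have "d^2 < s^2" using d False by simp
    then have ds: "d < s" using power_less_imp_less_base by blast
    have "x - d^2 \<le> 2*d" using d(2) by (simp add: power2_eq_square; arith)
    then have "x - d^2 \<le> L" using ds assms(3) by linarith
    then have "x - d^2 \<in> Q t z" using assms(1) by simp
    then show ?thesis using Q_add[of "x - d^2" t z d] assms(2) ds d by simp
  qed
qed

lemma Q_phase1:
  assumes "1 \<le> t" "2 \<le> z"
  shows "\<forall>x \<le> min (2*t) (2^z) - 2. x \<in> Q t z"
  using assms(2)
proof (induction z rule: nat_induct_at_least)
  case base
  show ?case using Q_ones[OF assms(1)] by auto
next
  case (Suc z)
  show ?case
  proof (cases "2*t \<le> 2^z")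
    case True
    then have "\<forall>x \<le> 2*t - 2. x \<in> Q t z" using Suc.IH by simp
    then have "\<forall>x \<le> 2*t - 2. x \<in> Q t (Suc z)" using Q_add[of _ t z 0] by fastforce
    then show ?thesis by auto
  next
    case False
    obtain y where y: "z = Suc (Suc y)" using Suc.hyps by (metis add_2_eq_Suc le_Suc_ex)
    have "\<forall>x \<le> 2^z - 2. x \<in> Q t z" using Suc.IH False by simp
    moreover have "2^Suc y \<le> t" using False y by simp
    moreover have "2 * 2^Suc y \<le> ((2::nat)^z - 2) + 2" using y by simp
    ultimately have h: "\<forall>x \<le> (2^z - 2) + (2^Suc y)^2. x \<in> Q t (Suc z)"
      by (rule Q_step)
    have a: "(2::nat)^y \<le> 2^y * 2^y" by simp
    have b: "(2::nat)^Suc z = 8 * 2^y" "(2::nat)^z = 4 * 2^y" "((2::nat)^Suc y)^2 = 4 * (2^y * 2^y)"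
      using y by (simp_all add: power2_eq_square)
    have "min (2*t) (2^Suc z) - 2 \<le> (2^z - 2) + (2^Suc y)^2"
      unfolding b using a by linarith
    then show ?thesis using h by auto
  qed
qed

lemma Q_phase2:
  assumes "1 \<le> t" "2 \<le> z0" "2*t \<le> 2^z0"
  shows "\<forall>x \<le> 2*t - 2 + j*t^2. x \<in> Q t (z0 + j)"
proof (induction j)
  case 0
  then show ?case using Q_phase1[OF assms(1,2)] assms(3) by simp
next
  case (Suc j)
  have "2*t \<le> (2*t - 2 + j*t^2) + 2" by simp
  from Q_step[OF Suc.IH order.refl this]
  show ?case by (simp add: algebra_simps)
qed

lemma pow_ge: "6 \<le> t \<Longrightarrow> 2*t \<le> (2::nat)^(t-2)"
proof (induction t rule: nat_induct_at_least)
  case base then show ?case by simp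
next
  case (Suc t)
  have "Suc t - 2 = Suc (t-2)" using Suc.hyps by simp
  then have "2^(Suc t - 2) = 2 * (2::nat)^(t-2)" by (simp only: power_Suc)
  then show ?case using Suc by simp
qed

lemma Q_lin:
  assumes "\<forall>x\<le>L. x \<in> Q t z0" "2*t \<le> L + 2"
  shows "\<forall>x \<le> L + j*t^2. x \<in> Q t (z0 + j)"
proof (induction j)
  case 0
  then show ?case using assms(1) by simp
next
  case (Suc j)
  have "2*t \<le> (L + j*t^2) + 2" using assms(2) by simp
  from Q_step[OF Suc.IH order.refl this]
  show ?case by (simp add: algebra_simps)
qed

lemma Q_6: assumes "2 \<le> t" shows "\<forall>x\<le>6. x \<in> Q t 3"
proof -
  have "\<forall>x\<le>2. x \<in> Q t 2" using Q_ones[of t] assms by simp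
  from Q_step[OF this, of 2] assms show ?thesis by (simp add: numeral_eq_Suc)
qed

lemma Q_15: assumes "3 \<le> t" shows "\<forall>x\<le>15. x \<in> Q t 4"
proof -
  from Q_step[OF Q_6, of t 3] assms show ?thesis by (simp add: numeral_eq_Suc)
qed

lemma Q_22: assumes "4 \<le> t" shows "\<forall>x\<le>22. x \<in> Q t 4"
proof -
  from Q_step[OF Q_6, of t 4] assms show ?thesis by (simp add: numeral_eq_Suc)
qed

lemma Q_47: assumes "5 \<le> t" shows "\<forall>x\<le>47. x \<in> Q t 5"
proof -
  from Q_step[OF Q_22, of t 5] assms show ?thesis by (simp add: numeral_eq_Suc)
qed

lemma key:
  assumes t1: "1 \<le> t" and nb: "\<not> (t = 2 \<and> z = 2)"
    and h: "r + 1 + 2*(t-1)^2 \<le> z*(2*t-1)"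
  shows "r \<in> Q t z"
proof -
  consider "t = 1" | "t = 2" | "t = 3" | "t = 4" | "t = 5" | "6 \<le> t" using t1 by linarith
  then show ?thesis
  proof cases
    case 1 then show ?thesis using h Q_ones[OF t1] by simp
  next
    case 2
    show ?thesis
    proof (cases "3 \<le> z")
      case True
      obtain j where j: "z = 3 + j" using True le_Suc_ex by blast
      have "r \<le> 6 + j*t^2" using h 2 unfolding j by (simp add: power2_eq_square)
      then show ?thesis using Q_lin[OF Q_6, of t j] 2 j by simp
    next
      case False then show ?thesis using h 2 nb Q_ones[OF t1] by (simp add: power2_eq_square; arith)
    qed
  next
    case 3
    show ?thesis
    proof (cases "4 \<le> z")
      case True
      obtain j where j: "z = 4 + j" using True le_Suc_ex by blast
      have "r \<le> 15 + j*t^2" using h 3 unfolding j by (simp add: power2_eq_square)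
      then show ?thesis using Q_lin[OF Q_15, of t j] 3 j by simp
    next
      case False
      then consider "z = 3" | "z \<le> 2" by linarith
      then show ?thesis
      proof cases
        case 1 then show ?thesis using h 3 Q_6[of t] by (simp add: power2_eq_square)
      next
        case 2 then show ?thesis using h 3 Q_ones[OF t1] by (simp add: power2_eq_square; arith)
      qed
    qed
  next
    case 4
    show ?thesis
    proof (cases "4 \<le> z")
      case True
      obtain j where j: "z = 4 + j" using True le_Suc_ex by blast
      have "r \<le> 22 + j*t^2" using h 4 unfolding j by (simp add: power2_eq_square)
      then show ?thesis using Q_lin[OF Q_22, of t j] 4 j by simp
    next
      case False then show ?thesis using h 4 Q_ones[OF t1] by (simp add: power2_eq_square; arith)
    qed
  next
    case 5
    show ?thesis
    proof (cases "5 \<le> z")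
      case True
      obtain j where j: "z = 5 + j" using True le_Suc_ex by blast
      have "r \<le> 47 + j*t^2" using h 5 unfolding j by (simp add: power2_eq_square)
      then show ?thesis using Q_lin[OF Q_47, of t j] 5 j by simp
    next
      case False then show ?thesis using h 5 Q_ones[OF t1] by (simp add: power2_eq_square; arith)
    qed
  next
    case 6
    then obtain u where u: "t = u + 6" by (metis add.commute le_Suc_ex)
    have h': "r + 1 + 2*(u+5)^2 \<le> z*(2*u+11)" using h u by (simp add: add.commute)
    have zge: "u + 5 \<le> z"
    proof (rule ccontr)
      assume "\<not> u + 5 \<le> z"
      then have "z \<le> u + 4" by simp
      then have "z*(2*u+11) \<le> (u+4)*(2*u+11)" by (rule mult_le_mono1)
      then show False using h' by (simp add: power2_eq_square algebra_simps)
    qed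
    then obtain e where e: "z = u + 5 + e" by (metis le_Suc_ex)
    have m: "e*(2*u+11) \<le> e*(u+6)^2" by (intro mult_le_mono2) (simp add: power2_eq_square algebra_simps)
    have r: "r \<le> 2*t - 2 + (1+e)*t^2"
      using h' m unfolding e u by (simp add: power2_eq_square algebra_simps)
    have z: "z = (t-2) + (1+e)" using e u by simp
    have p: "2*t \<le> 2^(t-2)" using pow_ge[OF 6] .
    have "\<forall>x \<le> 2*t - 2 + (1+e)*t^2. x \<in> Q t ((t-2) + (1+e))"
      by (rule Q_phase2) (use p 6 in auto)
    then show ?thesis using r z by simp
  qed
qed



lemma val_sq: "\<forall>d\<in>set ds. d \<le> t \<Longrightarrow>
  Val (2*t) (map (\<lambda>d. t-d) ds) + sum_list (map (\<lambda>d. d^2) ds) = length ds * t^2"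
proof (induction ds)
  case Nil then show ?case by (simp add: Val_def)
next
  case (Cons d ds)
  then have IH: "Val (2*t) (map (\<lambda>d. t-d) ds) + sum_list (map (\<lambda>d. d^2) ds) = length ds * t^2"
    and dt: "d \<le> t" by auto
  obtain e where e: "t = d + e" using dt le_Suc_ex by blast
  have one: "(2*t - (t-d))*(t-d) + d^2 = t^2"
    unfolding e by (simp add: power2_eq_square algebra_simps)
  have "Val (2*t) (map (\<lambda>d. t-d) (d#ds)) = (2*t - (t-d))*(t-d) + Val (2*t) (map (\<lambda>d. t-d) ds)"
    by (simp add: Val_def)
  then show ?case using IH one by simp
qed

lemma Vals_zero: "0 \<in> Vals n"
proof -
  have "Val 0 (replicate n 0) \<in> Vals n" by (rule construct) auto
  then show ?thesis by (simp add: Val_def sum_list_replicate)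
qed

lemma E:
  assumes n6: "n \<noteq> 6"
  shows "2*t \<le> n \<Longrightarrow> k \<le> (n - 2*t)*t^2 \<Longrightarrow> k \<in> Vals n"
proof (induction t arbitrary: k)
  case 0 then show ?case using Vals_zero by simp
next
  case (Suc t)
  define z where "z = n - 2*Suc t"
  have nz: "n - 2*t = z + 2" using Suc.prems z_def by simp
  show ?case
  proof (cases "k \<le> (n - 2*t)*t^2")
    case True then show ?thesis using Suc.IH Suc.prems by simp
  next
    case False
    then have kgt: "(z+2)*t^2 < k" using nz by simp
    have kle: "k \<le> z*(Suc t)^2" using Suc.prems z_def by simp
    define r where "r = z*(Suc t)^2 - k"
    have ex: "z*(Suc t)^2 = z*t^2 + 2*z*t + z" by (simp add: power2_eq_square algebra_simps)
    have h: "r + 1 + 2*(Suc t - 1)^2 \<le> z*(2*Suc t - 1)"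
      using kgt kle unfolding r_def ex by (simp add: algebra_simps)
    have nb: "\<not> (Suc t = 2 \<and> z = 2)" using n6 z_def Suc.prems by auto
    have "r \<in> Q (Suc t) z" by (rule key[OF _ nb h]) simp
    then obtain ds where ds: "r = sum_list (map (\<lambda>d. d^2) ds)" "length ds = z" "\<forall>d\<in>set ds. d \<le> Suc t"
      unfolding Q_def by blast
    have v: "Val (2*Suc t) (map (\<lambda>d. Suc t - d) ds) + r = z * (Suc t)^2"
      using val_sq[OF ds(3)] ds(1,2) by simp
    have "Val (2*Suc t) (map (\<lambda>d. Suc t - d) ds) = k" using v kle unfolding r_def by simp
    moreover have "Val (2*Suc t) (map (\<lambda>d. Suc t - d) ds) \<in> Vals n"
      by (rule construct) (use ds(2) z_def Suc.prems in auto)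
    ultimately show ?thesis by simp
  qed
qed

lemma sq_ineq: "2*r*e \<le> r^2 + (e::nat)^2"
proof -
  have "(0::int) \<le> (int r - int e)^2" by (rule zero_le_power2)
  then have "(0::int) \<le> (int r)^2 + (int e)^2 - 2*int r*int e" by (simp add: power2_diff)
  then have "int (2*r*e) \<le> int (r^2 + e^2)" by simp
  then show ?thesis by (simp only: of_nat_le_iff)
qed

lemma term_bound: "(m - r) * r \<le> (m::nat)^2 div 4"
proof (cases "r \<le> m")
  case True
  define e where "e = m - r"
  have e: "m = r + e" using True unfolding e_def by arith
  have me: "m - r = e" using e_def by simp
  have m2: "m^2 = r^2 + e^2 + 2*r*e" using e by (simp add: power2_sum)
  have s: "2*r*e \<le> r^2 + e^2" by (rule sq_ineq)
  have "4*(e*r) \<le> r^2 + e^2 + 2*r*e" using s by (simp add: algebra_simps)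
  then have "4*((m-r)*r) \<le> m^2" by (simp only: me m2)
  then have "4*((m-r)*r) div 4 \<le> m^2 div 4" by (rule div_le_mono)
  then show ?thesis by simp
next
  case False then show ?thesis by simp
qed

lemma Val_bound: "Val m rs \<le> length rs * (m^2 div 4)"
proof (induction rs)
  case Nil then show ?case by (simp add: Val_def)
next
  case (Cons r rs)
  then show ?case using term_bound[of m r] by (simp add: Val_def)
qed

lemma down:
  assumes n6: "n \<noteq> 6" and mn: "length rs + m = n" and k: "k \<le> Val m rs"
  shows "k \<in> Vals n"
proof -
  define z where "z = length rs"
  have kz: "k \<le> z * (m^2 div 4)" using Val_bound[of m rs] k z_def by simp
  define t where "t = m div 2"
  have t: "m = 2*t \<or> m = 2*t+1" unfolding t_def by presburger
  then show ?thesis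
  proof
    assume m: "m = 2*t"
    have "m^2 div 4 = t^2" unfolding m by (simp add: power2_eq_square)
    moreover have "n - 2*t = z" "2*t \<le> n" using mn m z_def by auto
    ultimately show ?thesis using E[OF n6, of t k] kz by simp
  next
    assume m: "m = 2*t+1"
    have "m^2 = 4*(t^2+t) + 1" unfolding m by (simp add: power2_eq_square algebra_simps)
    then have q: "m^2 div 4 = t^2 + t" by simp
    show ?thesis
    proof (cases "z \<le> t")
      case True
      have zt: "z*t \<le> t*t" using True by (rule mult_le_mono1)
      have e1: "z*(t^2+t) = z*(t*t) + z*t" by (simp add: power2_eq_square algebra_simps)
      have e2: "(z+1)*t^2 = z*(t*t) + t*t" by (simp add: power2_eq_square algebra_simps)
      have "k \<le> (z+1)*t^2" using kz q zt unfolding e2 by (simp only: e1)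
      moreover have "n - 2*t = z + 1" using mn m z_def by simp
      ultimately show ?thesis using E[OF n6, of t k] mn m z_def by simp
    next
      case False
      define y where "y = z - 1"
      have y: "z = y + 1" "t \<le> y" using False unfolding y_def by auto
      have tt: "t*t \<le> y*t" using y(2) by (rule mult_le_mono1)
      have f1: "z*(t^2+t) = y*(t*t) + y*t + t*t + t" unfolding y(1) by (simp add: power2_eq_square algebra_simps)
      have f2: "y*(t+1)^2 = y*(t*t) + y*t + y*t + y" by (simp add: power2_eq_square algebra_simps)
      have "z*(t^2+t) \<le> y*(t+1)^2" unfolding f1 f2 using tt y(2) by linarith
      then have "k \<le> y*(Suc t)^2" using kz q by simp
      moreover have "n - 2*Suc t = y" using mn m y z_def by simp
      moreover have "2*Suc t \<le> n" using mn m y z_def by simp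
      ultimately show ?thesis using E[OF n6, of "Suc t" k] by simp
    qed
  qed
qed


lemma five_not: "5 \<notin> Vals 6"
proof
  assume "5 \<in> Vals 6"
  then obtain w where w: "w \<in> binary_words 6" "subseq_count [1,0,1] w = 5" unfolding Vals_def by auto
  obtain m rs where mr: "length rs + m = 6" "\<forall>r\<in>set rs. r \<le> m" "Val m rs = 5"
    using charac[OF w(1)] w(2) by auto
  have le: "Val m rs \<le> length rs * (m^2 div 4)" by (rule Val_bound)
  have m6: "m \<le> 6" using mr(1) by simp
  consider "m \<le> 2" | "m = 3" | "m = 4" | "m = 5" | "m = 6" using m6 by linarith
  then show False
  proof cases
    case 1
    then consider "m \<le> 1" | "m = 2" by linarith
    then show False
    proof cases
      case 1
      then have "m^2 \<le> 1^2" by (intro power_mono) auto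
      then have "m^2 div 4 \<le> 1 div 4" by (intro div_le_mono) simp
      then have "m^2 div 4 = 0" by simp
      then show False using le mr(3) by simp
    next
      case 2
      then have "length rs = 4" using mr(1) by simp
      then show False using le mr(3) 2 by simp
    qed
  next
    case 2
    then obtain a b c where rs: "rs = [a,b,c]" using mr(1)
      by (auto simp: numeral_eq_Suc length_Suc_conv)
    have "a \<le> 3" "b \<le> 3" "c \<le> 3" using mr(2) rs 2 by auto
    then have "a \<in> {0,1,2,3}" "b \<in> {0,1,2,3}" "c \<in> {0,1,2,3}" by auto
    then show False using mr(3) rs 2 by (auto simp: Val_def)
  next
    case 3
    then obtain a b where rs: "rs = [a,b]" using mr(1)
      by (auto simp: numeral_eq_Suc length_Suc_conv)
    have "a \<le> 4" "b \<le> 4" using mr(2) rs 3 by auto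
    then have "a \<in> {0,1,2,3,4}" "b \<in> {0,1,2,3,4}" by auto
    then show False using mr(3) rs 3 by (auto simp: Val_def)
  next
    case 4
    then obtain a where rs: "rs = [a]" using mr(1)
      by (auto simp: numeral_eq_Suc length_Suc_conv)
    have "a \<le> 5" using mr(2) rs 4 by auto
    then have "a \<in> {0,1,2,3,4,5}" by auto
    then show False using mr(3) rs 4 by (auto simp: Val_def)
  next
    case 5
    then have "rs = []" using mr(1) by simp
    then show False using mr(3) by (simp add: Val_def)
  qed
qed

theorem mainTheorem17:
  shows "\<forall>n::nat. has_internal_zero [1, 0, 1] n \<longleftrightarrow> n = 6"
proof
  fix n :: nat
  show "has_internal_zero [1, 0, 1] n \<longleftrightarrow> n = 6"
  proof
    assume hz: "has_internal_zero [1, 0, 1] n"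
    show "n = 6"
    proof (rule ccontr)
      assume n6: "n \<noteq> 6"
      from hz obtain k1 k2 k3 where k: "k1 < k2" "k2 < k3" "B n [1,0,1] k2 = 0" "B n [1,0,1] k3 \<noteq> 0"
        unfolding has_internal_zero_def by blast
      have "k3 \<in> Vals n" using k(4) B_nz by blast
      then obtain w where w: "w \<in> binary_words n" "subseq_count [1,0,1] w = k3" unfolding Vals_def by auto
      obtain m rs where mr: "length rs + m = n" "\<forall>r\<in>set rs. r \<le> m" "subseq_count [1,0,1] w = Val m rs"
        using charac[OF w(1)] by blast
      have "k2 \<in> Vals n" by (rule down[OF n6 mr(1)]) (use k w mr in simp)
      then show False using k(3) B_nz by blast
    qed
  next
    assume n: "n = 6"
    have a: "B 6 [1,0,1] 0 \<noteq> 0" using B_nz Vals_zero by blast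
    have "Val 4 [2,2] \<in> Vals 6" by (rule construct) auto
    then have b: "B 6 [1,0,1] 8 \<noteq> 0" using B_nz by (simp add: Val_def)
    have c: "B 6 [1,0,1] 5 = 0" using B_nz five_not by blast
    show "has_internal_zero [1, 0, 1] n"
      unfolding has_internal_zero_def n using a b c
      by (intro exI[of _ 0] exI[of _ 5] exI[of _ 8]) simp
  qed
qed


end
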